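(* Let $\mathcal{A} = (Q,\Sigma,\delta,I,F)$ be a UFA. Suppose its forward determinization has $k$ states and its backward determinization has $\ell$ states. Then there exists a graph $G=(Q,E)$ (on the state set of $\mathcal{A}$) that has at least $k$ cliques and at least $\ell$ cocliques.
   Context: A UFA is an NFA $(Q,\Sigma,\delta,I,F)$ (finite states $Q$, finite alphabet $\Sigma$, transitions $\delta\subseteq Q\times\Sigma\times Q$, initial states $I$, accepting states $F$) in which every word has at most one accepting run. For $S\subseteq Q$, $w\in\Sigma^*$: $\delta(S,w)=\{r\mid\exists q\in S.\ q\xrightarrow{w}r\}$, $\delta^{-1}(w,S)=\{r\mid \exists q\in S.\ r\xrightarrow{w} q\}$. The forward determinization has state set $\{\delta(I,w)\mid w\in\Sigma^*\}$; the backward determinization has state set $\{\delta^{-1}(w,F)\mid w\in\Sigma^*\}$. A graph is a finite simple undirected graph $(V,E)$. A clique is a set $X\subseteq V$ with every two distinct vertices adjacent; a coclique (independent set) is a set $Y\subseteq V$ with no two distinct vertices adjacent. The empty set and singletons count as both cliques and cocliques. *)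

theory Defs
  imports Main
begin

definition nfa :: "'q set \<Rightarrow> 'a set \<Rightarrow> ('q \<times> 'a \<times> 'q) set \<Rightarrow> 'q set \<Rightarrow> 'q set \<Rightarrow> bool" where
  "nfa Q \<Sigma> \<delta> I F \<longleftrightarrow> finite Q \<and> finite \<Sigma> \<and> \<delta> \<subseteq> Q \<times> \<Sigma> \<times> Q \<and> I \<subseteq> Q \<and> F \<subseteq> Q"

fun path :: "('q \<times> 'a \<times> 'q) set \<Rightarrow> 'q \<Rightarrow> 'a list \<Rightarrow> 'q \<Rightarrow> bool" where
  "path \<delta> q [] r \<longleftrightarrow> q = r"
| "path \<delta> q (a # w) r \<longleftrightarrow> (\<exists>p. (q, a, p) \<in> \<delta> \<and> path \<delta> p w r)"

definition delta_set :: "('q \<times> 'a \<times> 'q) set \<Rightarrow> 'q set \<Rightarrow> 'a list \<Rightarrow> 'q set" where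
  "delta_set \<delta> S w = {r. \<exists>q\<in>S. path \<delta> q w r}"

definition delta_inv :: "('q \<times> 'a \<times> 'q) set \<Rightarrow> 'a list \<Rightarrow> 'q set \<Rightarrow> 'q set" where
  "delta_inv \<delta> w S = {r. \<exists>q\<in>S. path \<delta> r w q}"

definition accepting_run :: "('q \<times> 'a \<times> 'q) set \<Rightarrow> 'q set \<Rightarrow> 'q set \<Rightarrow> 'a list \<Rightarrow> 'q list \<Rightarrow> bool" where
  "accepting_run \<delta> I F w qs \<longleftrightarrow>
     length qs = length w + 1 \<and> (\<forall>i < length w. (qs ! i, w ! i, qs ! (i + 1)) \<in> \<delta>)
     \<and> hd qs \<in> I \<and> last qs \<in> F"

definition ufa :: "'q set \<Rightarrow> 'a set \<Rightarrow> ('q \<times> 'a \<times> 'q) set \<Rightarrow> 'q set \<Rightarrow> 'q set \<Rightarrow> bool" where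
  "ufa Q \<Sigma> \<delta> I F \<longleftrightarrow> nfa Q \<Sigma> \<delta> I F \<and>
     (\<forall>w \<in> lists \<Sigma>. \<forall>qs qs'. accepting_run \<delta> I F w qs \<and> accepting_run \<delta> I F w qs' \<longrightarrow> qs = qs')"

definition forward_det_states :: "'a set \<Rightarrow> ('q \<times> 'a \<times> 'q) set \<Rightarrow> 'q set \<Rightarrow> 'q set set" where
  "forward_det_states \<Sigma> \<delta> I = {delta_set \<delta> I w | w. w \<in> lists \<Sigma>}"

definition backward_det_states :: "'a set \<Rightarrow> ('q \<times> 'a \<times> 'q) set \<Rightarrow> 'q set \<Rightarrow> 'q set set" where
  "backward_det_states \<Sigma> \<delta> F = {delta_inv \<delta> w F | w. w \<in> lists \<Sigma>}"

definition simple_graph :: "'v set \<Rightarrow> ('v \<times> 'v) set \<Rightarrow> bool" where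
  "simple_graph V E \<longleftrightarrow> finite V \<and> E \<subseteq> V \<times> V \<and> sym E \<and> (\<forall>v. (v, v) \<notin> E)"

definition clique :: "'v set \<Rightarrow> ('v \<times> 'v) set \<Rightarrow> 'v set \<Rightarrow> bool" where
  "clique V E X \<longleftrightarrow> X \<subseteq> V \<and> (\<forall>x\<in>X. \<forall>y\<in>X. x \<noteq> y \<longrightarrow> (x, y) \<in> E)"

definition coclique :: "'v set \<Rightarrow> ('v \<times> 'v) set \<Rightarrow> 'v set \<Rightarrow> bool" where
  "coclique V E Y \<longleftrightarrow> Y \<subseteq> V \<and> (\<forall>x\<in>Y. \<forall>y\<in>Y. x \<noteq> y \<longrightarrow> (x, y) \<notin> E)"

end

theory Submission
  imports Defs
begin

definition runp :: "('q \<times> 'a \<times> 'q) set \<Rightarrow> 'a list \<Rightarrow> 'q list \<Rightarrow> bool" where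
  "runp \<delta> w qs \<longleftrightarrow> length qs = length w + 1 \<and> (\<forall>i < length w. (qs ! i, w ! i, qs ! (i + 1)) \<in> \<delta>)"

lemma path_run: "path \<delta> q w r \<Longrightarrow> \<exists>qs. runp \<delta> w qs \<and> hd qs = q \<and> last qs = r"
proof (induction w arbitrary: q)
  case Nil thus ?case by (intro exI[of _ "[q]"]) (auto simp: runp_def)
next
  case (Cons c w)
  then obtain p where p: "(q, c, p) \<in> \<delta>" "path \<delta> p w r" by auto
  then obtain qs where qs: "runp \<delta> w qs" "hd qs = p" "last qs = r" using Cons.IH by blast
  have ne: "qs \<noteq> []" using qs(1) by (auto simp: runp_def)
  have "runp \<delta> (c # w) (q # qs)"
    unfolding runp_def
  proof (intro conjI allI impI)
    show "length (q # qs) = length (c # w) + 1" using qs(1) by (simp add: runp_def)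
    fix i assume i: "i < length (c # w)"
    show "((q # qs) ! i, (c # w) ! i, (q # qs) ! (i + 1)) \<in> \<delta>"
    proof (cases i)
      case 0 thus ?thesis using p(1) qs(2) ne by (simp add: hd_conv_nth)
    next
      case (Suc j) thus ?thesis using qs(1) i by (simp add: runp_def)
    qed
  qed
  thus ?case using ne qs by (intro exI[of _ "q # qs"]) auto
qed

lemma concat_run:
  "path \<delta> a u q \<Longrightarrow> runp \<delta> v qs2 \<Longrightarrow> hd qs2 = q \<Longrightarrow> last qs2 = b \<Longrightarrow>
   \<exists>qs. runp \<delta> (u @ v) qs \<and> hd qs = a \<and> last qs = b \<and> qs ! length u = q"
proof (induction u arbitrary: a)
  case Nil
  have ne: "qs2 \<noteq> []" using Nil(2) by (auto simp: runp_def)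
  thus ?case using Nil by (intro exI[of _ qs2]) (auto simp: hd_conv_nth)
next
  case (Cons c u)
  then obtain p where p: "(a, c, p) \<in> \<delta>" "path \<delta> p u q" by auto
  then obtain qs where qs: "runp \<delta> (u @ v) qs" "hd qs = p" "last qs = b" "qs ! length u = q"
    using Cons.IH Cons.prems by blast
  have ne: "qs \<noteq> []" using qs(1) by (auto simp: runp_def)
  have "runp \<delta> (c # u @ v) (a # qs)"
    unfolding runp_def
  proof (intro conjI allI impI)
    show "length (a # qs) = length (c # u @ v) + 1" using qs(1) by (simp add: runp_def)
    fix i assume i: "i < length (c # u @ v)"
    show "((a # qs) ! i, (c # u @ v) ! i, (a # qs) ! (i + 1)) \<in> \<delta>"
    proof (cases i)
      case 0 thus ?thesis using p(1) qs(2) ne by (simp add: hd_conv_nth)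
    next
      case (Suc j) thus ?thesis using qs(1) i by (simp add: runp_def)
    qed
  qed
  thus ?case using ne qs by (intro exI[of _ "a # qs"]) auto
qed

lemma lists_path_fw: "path \<delta> a u q \<Longrightarrow> a \<in> Q \<Longrightarrow> \<delta> \<subseteq> Q \<times> \<Sigma> \<times> Q \<Longrightarrow> q \<in> Q"
  by (induction u arbitrary: a) auto

lemma lists_path_bw: "path \<delta> a u q \<Longrightarrow> q \<in> Q \<Longrightarrow> \<delta> \<subseteq> Q \<times> \<Sigma> \<times> Q \<Longrightarrow> a \<in> Q"
  by (induction u arbitrary: a) auto

lemma inter_le1:
  assumes "ufa Q \<Sigma> \<delta> I F" "u \<in> lists \<Sigma>" "v \<in> lists \<Sigma>"
    "q1 \<in> delta_set \<delta> I u" "q1 \<in> delta_inv \<delta> v F"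
    "q2 \<in> delta_set \<delta> I u" "q2 \<in> delta_inv \<delta> v F"
  shows "q1 = q2"
proof -
  obtain a1 b1 where 1: "a1 \<in> I" "path \<delta> a1 u q1" "b1 \<in> F" "path \<delta> q1 v b1"
    using assms(4,5) by (auto simp: delta_set_def delta_inv_def)
  obtain a2 b2 where 2: "a2 \<in> I" "path \<delta> a2 u q2" "b2 \<in> F" "path \<delta> q2 v b2"
    using assms(6,7) by (auto simp: delta_set_def delta_inv_def)
  obtain r1 where r1: "runp \<delta> v r1" "hd r1 = q1" "last r1 = b1" using path_run[OF 1(4)] by blast
  obtain r2 where r2: "runp \<delta> v r2" "hd r2 = q2" "last r2 = b2" using path_run[OF 2(4)] by blast
  obtain s1 where s1: "runp \<delta> (u @ v) s1" "hd s1 = a1" "last s1 = b1" "s1 ! length u = q1"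
    using concat_run[OF 1(2) r1] by blast
  obtain s2 where s2: "runp \<delta> (u @ v) s2" "hd s2 = a2" "last s2 = b2" "s2 ! length u = q2"
    using concat_run[OF 2(2) r2] by blast
  have "accepting_run \<delta> I F (u @ v) s1" "accepting_run \<delta> I F (u @ v) s2"
    using s1 s2 1 2 by (auto simp: accepting_run_def runp_def)
  moreover have "u @ v \<in> lists \<Sigma>" using assms(2,3) by auto
  ultimately have "s1 = s2" using assms(1) unfolding ufa_def by blast
  thus ?thesis using s1 s2 by simp
qed

theorem lemma2:
  fixes Q :: "'q set" and \<Sigma> :: "'a set" and \<delta> :: "('q \<times> 'a \<times> 'q) set" and I F :: "'q set"
    and k l :: nat
  assumes "ufa Q \<Sigma> \<delta> I F"
    and "card (forward_det_states \<Sigma> \<delta> I) = k"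
    and "card (backward_det_states \<Sigma> \<delta> F) = l"
  shows "\<exists>E. simple_graph Q E \<and> card {X. clique Q E X} \<ge> k \<and> card {Y. coclique Q E Y} \<ge> l"
proof -
  let ?FW = "forward_det_states \<Sigma> \<delta> I"
  let ?BW = "backward_det_states \<Sigma> \<delta> F"
  have nfa: "finite Q" "\<delta> \<subseteq> Q \<times> \<Sigma> \<times> Q" "I \<subseteq> Q" "F \<subseteq> Q"
    using assms(1) by (auto simp: ufa_def nfa_def)
  have FWsub: "X \<subseteq> Q" if "X \<in> ?FW" for X
    using that nfa lists_path_fw[of \<delta> _ _ _ Q \<Sigma>]
    by (auto simp: forward_det_states_def delta_set_def)
  have BWsub: "Y \<subseteq> Q" if "Y \<in> ?BW" for Y
    using that nfa lists_path_bw[of \<delta> _ _ _ Q \<Sigma>]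
    by (auto simp: backward_det_states_def delta_inv_def)
  define E where "E = {(p, q). p \<noteq> q \<and> (\<exists>X\<in>?FW. p \<in> X \<and> q \<in> X)}"
  have sg: "simple_graph Q E"
    unfolding simple_graph_def E_def using nfa(1) FWsub by (auto simp: sym_def)
  have fin1: "finite {X. clique Q E X}"
    by (rule finite_subset[of _ "Pow Q"]) (auto simp: clique_def nfa(1))
  have fin2: "finite {X. coclique Q E X}"
    by (rule finite_subset[of _ "Pow Q"]) (auto simp: coclique_def nfa(1))
  have c1: "?FW \<subseteq> {X. clique Q E X}"
    using FWsub by (auto simp: clique_def E_def)
  have c2: "?BW \<subseteq> {X. coclique Q E X}"
  proof
    fix Y assume Y: "Y \<in> ?BW"
    then obtain v where v: "v \<in> lists \<Sigma>" "Y = delta_inv \<delta> v F" by (auto simp: backward_det_states_def)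
    have "(x, y) \<notin> E" if "x \<in> Y" "y \<in> Y" "x \<noteq> y" for x y
    proof
      assume "(x, y) \<in> E"
      then obtain X where "X \<in> ?FW" "x \<in> X" "y \<in> X" by (auto simp: E_def)
      then obtain u where "u \<in> lists \<Sigma>" "X = delta_set \<delta> I u" by (auto simp: forward_det_states_def)
      hence "x = y" using inter_le1[OF assms(1)] v that \<open>x \<in> X\<close> \<open>y \<in> X\<close> by blast
      thus False using that by simp
    qed
    thus "Y \<in> {X. coclique Q E X}" using BWsub[OF Y] by (auto simp: coclique_def)
  qed
  show ?thesis
    using sg card_mono[OF fin1 c1] card_mono[OF fin2 c2] assms(2,3) by blast
qed

end
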